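(* Let $n\ge 5$ and let $\sigma$ be a maximal simplex of $\Delta_n$ that covers all places. If there exists $w\in\sigma$ with $N(w)\cap\sigma=\{v\}$, then $N(v)\subseteq\sigma$.
   Context: $\mathbb{I}_n$ is the $n$-dimensional hypercube graph on vertex set $\{0,1\}^n$ (adjacent iff differing in exactly one coordinate), with Hamming distance $d(v,w)=\#\{i: v(i)\ne w(i)\}$, $v(i)$ the $i$-th coordinate. $\Delta_n=\mathcal{VR}(\mathbb{I}_n;3)$ is the simplicial complex whose simplices are the subsets $\sigma\subseteq\{0,1\}^n$ with $d(x,y)\le 3$ for all $x,y\in\sigma$. A simplex $\sigma$ covers all places if for each $i\in[n]=\{1,\dots,n\}$ there are $v,w\in\sigma$ with $v(i)=1$ and $w(i)=0$. $N(v)=\{v^i: i\in[n]\}$, where $v^i$ is $v$ with coordinate $i$ changed. *)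

theory Defs
  imports Main
begin

text \<open>A vertex of the n-cube {0,1}^n is encoded as the set of coordinates
(in {1..n}) where it equals 1.\<close>

definition cube_vertices :: "nat \<Rightarrow> nat set set" where
  "cube_vertices n = Pow {1..n}"

definition hamming :: "nat set \<Rightarrow> nat set \<Rightarrow> nat" where
  "hamming v w = card ((v - w) \<union> (w - v))"

text \<open>Simplices of the Vietoris-Rips complex VR(I_n; 3).\<close>
definition is_simplex :: "nat \<Rightarrow> nat set set \<Rightarrow> bool" where
  "is_simplex n \<sigma> \<longleftrightarrow> \<sigma> \<noteq> {} \<and> \<sigma> \<subseteq> cube_vertices n \<and>
     (\<forall>x\<in>\<sigma>. \<forall>y\<in>\<sigma>. hamming x y \<le> 3)"

definition is_maximal_simplex :: "nat \<Rightarrow> nat set set \<Rightarrow> bool" where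
  "is_maximal_simplex n \<sigma> \<longleftrightarrow> is_simplex n \<sigma> \<and>
     (\<forall>\<tau>. is_simplex n \<tau> \<and> \<sigma> \<subseteq> \<tau> \<longrightarrow> \<tau> = \<sigma>)"

definition covers_all_places :: "nat \<Rightarrow> nat set set \<Rightarrow> bool" where
  "covers_all_places n \<sigma> \<longleftrightarrow>
     (\<forall>i\<in>{1..n}. \<exists>v\<in>\<sigma>. \<exists>w\<in>\<sigma>. i \<in> v \<and> i \<notin> w)"

definition flip :: "nat set \<Rightarrow> nat \<Rightarrow> nat set" where
  "flip v i = (if i \<in> v then v - {i} else insert i v)"

definition nbhd :: "nat \<Rightarrow> nat set \<Rightarrow> nat set set" where
  "nbhd n v = (\<lambda>i. flip v i) ` {1..n}"

end

theory Submission
  imports Defs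
begin

lemma ham_sym: "hamming x y = hamming y x"
  unfolding hamming_def by (simp add: Un_commute)

lemma ham_formula:
  assumes "finite A" "finite B"
  shows "hamming A B + 2 * card (A \<inter> B) = card A + card B"
proof -
  have d: "(A - B) \<inter> (B - A) = {}" by auto
  have "hamming A B = card (A - B) + card (B - A)"
    unfolding hamming_def using assms d by (simp add: card_Un_disjoint)
  moreover have "card (A - B) = card A - card (A \<inter> B)"
    using assms by (simp add: card_Diff_subset_Int)
  moreover have "card (B - A) = card B - card (A \<inter> B)"
    using assms by (metis card_Diff_subset_Int finite_Int inf_commute)
  moreover have "card (A \<inter> B) \<le> card A" "card (A \<inter> B) \<le> card B"
    using assms by (simp_all add: card_mono)
  ultimately show ?thesis by linarith
qed

lemma ham_lb:
  assumes "finite A" "finite B" "A \<inter> B \<subseteq> C" "finite C"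
  shows "card A + card B \<le> hamming A B + 2 * card C"
  using ham_formula[OF assms(1,2)] card_mono[OF assms(4,3)] by linarith

lemma ham_ub:
  assumes "finite A" "finite B" "C \<subseteq> A \<inter> B"
  shows "hamming A B + 2 * card C \<le> card A + card B"
proof -
  have "card C \<le> card (A \<inter> B)" using assms by (simp add: card_mono)
  thus ?thesis using ham_formula[OF assms(1,2)] by linarith
qed

lemma core:
  assumes n5: "n \<ge> 5"
    and mx: "is_maximal_simplex n S"
    and cov: "covers_all_places n S"
    and e0: "{} \<in> S"
    and nb: "nbhd n {} \<inter> S = {v}"
  shows "nbhd n v \<subseteq> S"
proof -
  have cube: "\<And>x. x \<in> S \<Longrightarrow> x \<subseteq> {1..n}"
    using mx unfolding is_maximal_simplex_def is_simplex_def cube_vertices_def by auto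
  have fin: "\<And>x. x \<in> S \<Longrightarrow> finite x"
    using cube finite_subset by blast
  have d3: "\<And>x y. x \<in> S \<Longrightarrow> y \<in> S \<Longrightarrow> hamming x y \<le> 3"
    using mx unfolding is_maximal_simplex_def is_simplex_def by auto
  have ext: "\<And>u. u \<subseteq> {1..n} \<Longrightarrow> (\<forall>x\<in>S. hamming u x \<le> 3) \<Longrightarrow> u \<in> S"
  proof -
    fix u assume u: "u \<subseteq> {1..n}" "\<forall>x\<in>S. hamming u x \<le> 3"
    have "hamming u u = 0" unfolding hamming_def by simp
    hence "is_simplex n (insert u S)"
      using u mx ham_sym unfolding is_maximal_simplex_def is_simplex_def cube_vertices_def
      by auto
    hence "insert u S = S" using mx unfolding is_maximal_simplex_def by blast
    thus "u \<in> S" by blast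
  qed
  have nb0: "nbhd n {} = (\<lambda>j. {j}) ` {1..n}"
    unfolding nbhd_def flip_def by auto
  have singl: "\<And>j. j \<in> {1..n} \<Longrightarrow> {j} \<in> S \<Longrightarrow> {j} = v"
    using nb nb0 by auto
  have "v \<in> nbhd n {}" using nb by blast
  then obtain i where vi: "v = {i}" "i \<in> {1..n}" using nb0 by auto
  have h0: "\<And>x. finite x \<Longrightarrow> hamming {} x = card x" unfolding hamming_def by simp
  have c3: "\<And>x. x \<in> S \<Longrightarrow> card x \<le> 3" using d3[OF e0] h0 fin by metis
  have key: "\<And>x. x \<in> S \<Longrightarrow> x \<noteq> {} \<Longrightarrow> i \<in> x"
  proof (rule ccontr)
    fix x assume xS: "x \<in> S" and xne: "x \<noteq> {}" and ix: "i \<notin> x"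
    have fx: "finite x" using fin[OF xS] .
    have "card x \<noteq> 1"
    proof
      assume "card x = 1"
      then obtain j where xj: "x = {j}" by (auto simp: card_Suc_eq)
      hence "j \<in> {1..n}" using cube[OF xS] by auto
      hence "x = v" using singl xS xj by blast
      thus False using ix vi by auto
    qed
    moreover have "card x \<noteq> 0" using fx xne by simp
    moreover have "card x \<le> 2"
    proof -
      have "card {i} + card x \<le> hamming {i} x + 2 * card ({}::nat set)"
        by (rule ham_lb) (use fx ix in auto)
      moreover have "hamming {i} x \<le> 3" using d3 xS e0 vi nb by blast
      ultimately show ?thesis by simp
    qed
    ultimately have "card x = 2" by linarith
    then obtain a b where xab: "x = {a,b}" "a \<noteq> b" by (meson card_2_iff)
    have ia: "i \<noteq> a" "i \<noteq> b" using ix xab by auto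
    have vS: "{i} \<in> S" using nb vi by blast
    have third: "\<exists>c. {i,b,c} \<in> S \<and> c \<noteq> i \<and> c \<noteq> a \<and> c \<noteq> b"
      if xab': "x = {a,b}" "a \<noteq> b" "i \<noteq> a" "i \<noteq> b" for a b
    proof -
      have aR: "a \<in> {1..n}" using cube[OF xS] xab' by auto
      have "{a} \<notin> S" using singl[OF aR] vi xab' by auto
      then obtain y where yS: "y \<in> S" and hy: "\<not> hamming {a} y \<le> 3"
        using ext[of "{a}"] aR by blast
      have fy: "finite y" using fin[OF yS] .
      have ay: "a \<notin> y"
      proof
        assume "a \<in> y"
        have "hamming {a} y + 2 * card {a} \<le> card {a} + card y"
          by (rule ham_ub) (use fy \<open>a \<in> y\<close> in auto)
        thus False using hy c3[OF yS] by simp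
      qed
      have "card {a} + card y \<le> hamming {a} y + 2 * card ({}::nat set)"
        by (rule ham_lb) (use fy ay in auto)
      moreover have "hamming {a} y + 2 * card ({}::nat set) \<le> card {a} + card y"
        by (rule ham_ub) (use fy in auto)
      ultimately have cy: "card y = 3" using hy c3[OF yS] by simp
      have iy: "i \<in> y"
      proof (rule ccontr)
        assume "i \<notin> y"
        have "card {i} + card y \<le> hamming {i} y + 2 * card ({}::nat set)"
          by (rule ham_lb) (use fy \<open>i \<notin> y\<close> in auto)
        thus False using d3[OF vS yS] cy by simp
      qed
      have "b \<in> y"
      proof (rule ccontr)
        assume "b \<notin> y"
        have "card x + card y \<le> hamming x y + 2 * card ({}::nat set)"
          by (rule ham_lb) (use fx fy \<open>b \<notin> y\<close> ay xab' in auto)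
        thus False using d3[OF xS yS] cy \<open>card x = 2\<close> by simp
      qed
      have "card (y - {i,b}) = 1"
        using cy iy \<open>b \<in> y\<close> xab' fy by (simp add: card_Diff_subset)
      then obtain c where yc: "y - {i,b} = {c}" by (auto simp: card_Suc_eq)
      hence "y = {i,b,c}" using iy \<open>b \<in> y\<close> by auto
      moreover have "c \<noteq> i" "c \<noteq> b" using yc by auto
      moreover have "c \<noteq> a" using yc ay by auto
      ultimately show ?thesis using yS by blast
    qed
    obtain c where y: "{i,b,c} \<in> S" "c \<noteq> i" "c \<noteq> a" "c \<noteq> b"
      using third[OF xab ia] by blast
    obtain d where z: "{i,a,d} \<in> S" "d \<noteq> i" "d \<noteq> b" "d \<noteq> a"
      using third[of b a] xab ia by (auto simp: insert_commute)
    have "c = d"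
    proof (rule ccontr)
      assume "c \<noteq> d"
      have "card {i,b,c} + card {i,a,d} \<le> hamming {i,b,c} {i,a,d} + 2 * card {i}"
        by (rule ham_lb) (use \<open>c \<noteq> d\<close> y z xab in auto)
      thus False using d3[OF y(1) z(1)] y z xab ia by simp
    qed
    have "\<not> {1..n} \<subseteq> {i,a,b,c}"
    proof
      assume "{1..n} \<subseteq> {i,a,b,c}"
      hence "card {1..n} \<le> card {i,a,b,c}" by (intro card_mono) auto
      moreover have "card {i,a,b,c} \<le> 4" by (simp add: card_insert_if)
      ultimately show False using n5 by simp
    qed
    then obtain e where eR: "e \<in> {1..n}" and ne: "e \<notin> {i,a,b,c}" by blast
    obtain t where tS: "t \<in> S" and et: "e \<in> t" using cov eR unfolding covers_all_places_def by blast
    have ft: "finite t" using fin[OF tS] .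
    define Y where "Y = {i,b,c}"
    define Z where "Z = {i,a,c}"
    have YS: "Y \<in> S" and ZS: "Z \<in> S" using y z \<open>c = d\<close> unfolding Y_def Z_def by auto
    have cY: "card Y = 3" and cZ: "card Z = 3" unfolding Y_def Z_def using y xab ia by auto
    have cx2: "card x = 2" by fact
    have ct: "card t \<in> {1,2,3}" using c3[OF tS] et ft by (cases "card t") auto
    show False
    proof -
      { assume "card t = 1"
        then obtain j where tj: "t = {j}" by (auto simp: card_Suc_eq)
        hence "j \<in> {1..n}" using cube[OF tS] by auto
        hence "t = v" using singl tS tj by blast
        hence False using ne et vi by auto }
      moreover
      { assume "card t = 2"
        then obtain f where tf: "t = {e,f}" "f \<noteq> e" using et
          by (metis card_2_iff insertE insert_commute singletonD)
        have inS: "f \<in> W" if WS: "W \<in> S" and cW: "card W + 2 \<ge> 4" and eW: "e \<notin> W" for W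
        proof (rule ccontr)
          assume "f \<notin> W"
          have "card t + card W \<le> hamming t W + 2 * card ({}::nat set)"
            by (rule ham_lb) (use ft fin[OF WS] \<open>f \<notin> W\<close> eW tf in auto)
          thus False using d3[OF tS WS] cW \<open>card t = 2\<close> by simp
        qed
        have "f \<in> x" using inS[OF xS] cx2 ne xab by auto
        moreover have "f \<in> Y" using inS[OF YS] cY ne unfolding Y_def by auto
        moreover have "f \<in> Z" using inS[OF ZS] cZ ne unfolding Z_def by auto
        ultimately have False using xab y ia unfolding Y_def Z_def by auto }
      moreover
      { assume "card t = 3"
        hence "card (t - {e}) = 2" using et ft by simp
        then obtain f g where fg0: "t - {e} = {f,g}" "f \<noteq> g" by (meson card_2_iff)
        hence tf: "t = {e,f,g}" "f \<noteq> e" "g \<noteq> e" "f \<noteq> g" using et by auto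
        have inS: "f \<in> W \<and> g \<in> W" if WS: "W \<in> S" and cW: "card W = 3" and eW: "e \<notin> W" for W
        proof (rule ccontr)
          assume "\<not> (f \<in> W \<and> g \<in> W)"
          then obtain h where "t \<inter> W \<subseteq> {h}" using eW tf by auto
          have "card t + card W \<le> hamming t W + 2 * card {h}"
            by (rule ham_lb) (use ft fin[OF WS] \<open>t \<inter> W \<subseteq> {h}\<close> in auto)
          thus False using d3[OF tS WS] cW \<open>card t = 3\<close> by simp
        qed
        have "f \<in> Y \<and> g \<in> Y" using inS[OF YS cY] ne unfolding Y_def by auto
        moreover have "f \<in> Z \<and> g \<in> Z" using inS[OF ZS cZ] ne unfolding Z_def by auto
        ultimately have fg: "f \<in> {i,c}" "g \<in> {i,c}" using xab y ia unfolding Y_def Z_def by auto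
        have "card t + card x \<le> hamming t x + 2 * card ({}::nat set)"
          by (rule ham_lb) (use ft fx tf fg ne xab y ia in auto)
        hence False using d3[OF tS xS] cx2 \<open>card t = 3\<close> by simp }
      ultimately show False using ct by auto
    qed
  qed
  show ?thesis
  proof
    fix u assume "u \<in> nbhd n v"
    then obtain j where j: "j \<in> {1..n}" "u = flip {i} j" unfolding nbhd_def vi by auto
    show "u \<in> S"
    proof (cases "j = i")
      case True thus ?thesis using j e0 by (simp add: flip_def)
    next
      case False
      hence u: "u = {i,j}" using j by (auto simp: flip_def)
      show ?thesis
      proof (rule ext)
        show "u \<subseteq> {1..n}" using u j vi by auto
        show "\<forall>x\<in>S. hamming u x \<le> 3"
        proof
          fix x assume xS: "x \<in> S"
          show "hamming u x \<le> 3"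
          proof (cases "x = {}")
            case True thus ?thesis using u False by (simp add: hamming_def)
          next
            case ne: False
            have "{i} \<subseteq> u \<inter> x" using key[OF xS ne] u by auto
            from ham_ub[OF _ fin[OF xS] this] have "hamming u x + 2 \<le> card u + card x"
              using u by simp
            moreover have "card u = 2" using u False by simp
            ultimately show ?thesis using c3[OF xS] by linarith
          qed
        qed
      qed
    qed
  qed
qed

definition tr :: "nat set \<Rightarrow> nat set \<Rightarrow> nat set" where
  "tr w x = (x - w) \<union> (w - x)"

lemma tr_tr[simp]: "tr w (tr w x) = x" unfolding tr_def by auto
lemma tr_inj: "inj (tr w)" by (metis injI tr_tr)
lemma tr_ham[simp]: "hamming (tr w x) (tr w y) = hamming x y"
proof -
  have "(tr w x - tr w y) \<union> (tr w y - tr w x) = (x - y) \<union> (y - x)" unfolding tr_def by auto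
  thus ?thesis unfolding hamming_def by simp
qed
lemma tr_cube: "w \<subseteq> {1..n} \<Longrightarrow> tr w x \<subseteq> {1..n} \<longleftrightarrow> x \<subseteq> {1..n}"
  unfolding tr_def by auto
lemma tr_flip: "flip (tr w x) j = tr w (flip x j)"
  unfolding tr_def flip_def by auto
lemma tr_nbhd: "nbhd n (tr w x) = tr w ` nbhd n x"
  unfolding nbhd_def by (auto simp: tr_flip image_image)

lemma tr_simplex:
  assumes "w \<subseteq> {1..n}"
  shows "is_simplex n (tr w ` T) \<longleftrightarrow> is_simplex n T"
  unfolding is_simplex_def cube_vertices_def using tr_cube[OF assms] by auto

lemma tr_maximal:
  assumes w: "w \<subseteq> {1..n}" and m: "is_maximal_simplex n S"
  shows "is_maximal_simplex n (tr w ` S)"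
  unfolding is_maximal_simplex_def
proof (intro conjI allI impI)
  show "is_simplex n (tr w ` S)" using m tr_simplex[OF w] unfolding is_maximal_simplex_def by blast
  fix T assume a: "is_simplex n T \<and> tr w ` S \<subseteq> T"
  have "is_simplex n (tr w ` T)" using a tr_simplex[OF w, of "tr w ` T"] by (simp add: image_image)
  moreover have "S \<subseteq> tr w ` T" using a by (force simp: image_image)
  ultimately have "tr w ` T = S" using m unfolding is_maximal_simplex_def by blast
  hence "tr w ` tr w ` T = tr w ` S" by simp
  thus "T = tr w ` S" by (simp add: image_image)
qed

lemma tr_cov:
  assumes "covers_all_places n S"
  shows "covers_all_places n (tr w ` S)"
  unfolding covers_all_places_def
proof
  fix i assume "i \<in> {1..n}"
  then obtain a b where ab: "a \<in> S" "b \<in> S" "i \<in> a" "i \<notin> b"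
    using assms unfolding covers_all_places_def by blast
  show "\<exists>v\<in>tr w ` S. \<exists>u\<in>tr w ` S. i \<in> v \<and> i \<notin> u"
  proof (cases "i \<in> w")
    case True
    hence "i \<in> tr w b" "i \<notin> tr w a" using ab unfolding tr_def by auto
    thus ?thesis using ab by blast
  next
    case False
    hence "i \<in> tr w a" "i \<notin> tr w b" using ab unfolding tr_def by auto
    thus ?thesis using ab by blast
  qed
qed

theorem mainTheorem7:
  fixes n :: nat and \<sigma> :: "nat set set" and v w :: "nat set"
  assumes "n \<ge> 5"
    and "is_maximal_simplex n \<sigma>"
    and "covers_all_places n \<sigma>"
    and "w \<in> \<sigma>"
    and "nbhd n w \<inter> \<sigma> = {v}"
  shows "nbhd n v \<subseteq> \<sigma>"
proof -
  have wc: "w \<subseteq> {1..n}" using assms(2,4)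
    unfolding is_maximal_simplex_def is_simplex_def cube_vertices_def by auto
  have e: "tr w w = {}" unfolding tr_def by simp
  have "nbhd n (tr w w) \<inter> tr w ` \<sigma> = tr w ` (nbhd n w \<inter> \<sigma>)"
    by (simp add: tr_nbhd image_Int[OF tr_inj])
  hence nb: "nbhd n {} \<inter> tr w ` \<sigma> = {tr w v}" using assms(5) e by simp
  have "nbhd n (tr w v) \<subseteq> tr w ` \<sigma>"
    by (rule core[OF assms(1) tr_maximal[OF wc assms(2)] tr_cov[OF assms(3)] _ nb])
       (use assms(4) e in force)
  hence "tr w ` nbhd n v \<subseteq> tr w ` \<sigma>" by (simp add: tr_nbhd)
  thus ?thesis by (simp add: inj_image_subset_iff[OF tr_inj])
qed

end
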